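(* Let $a_{ij}>0$ ($i,j=1,2$) and $b_1,b_2>0$, and assume (A1) $\langle Ax,x\rangle>0$ for all $x\in\mathbb{R}^2\setminus\{0\}$, where $A=(a_{ij})$, and (A2) the matrix $\begin{pmatrix}b_1a_{11}&b_1a_{12}\\ b_2a_{21}&b_2a_{22}\end{pmatrix}$ has two real positive eigenvalues. Consider, for $\lambda>0$, $\alpha\in[0,1]$, $\tau>0$, the problem $$\dot x_1(t)=-\alpha\lambda\big(a_{11}x_1(t-\tau/\lambda)+a_{12}x_2(t-\tau/\lambda)\big)(b_1+x_1(t)),$$ $$\dot x_2(t)=-\alpha\lambda\big(a_{21}x_1(t-\tau/\lambda)+a_{22}x_2(t-\tau/\lambda)\big)(b_2+x_2(t)).\qquad (\ast)$$ Let $\lambda_1,\lambda_2\in\mathbb{R}^+$ with $\lambda_1<\lambda_2$. Then: (1) there exist positive numbers $m_0,d_1,d_2,d_3,d_4$ such that for each $\lambda\in[\lambda_1,\lambda_2]$, $\alpha\in[0,1]$ and $\tau\ge 1$, every solution $(x_1,x_2)\in\Theta_0$ of $(\ast)$ satisfies $|\dot x_i|_\infty<m_0$ and $|\ddot x_i|_\infty<m_0$ for $i=1,2$, and $$-b_1<-d_1<x_1(t)<d_3,\qquad -b_2<-d_2<x_2(t)<d_4\quad\text{for all }t\in[0,2\pi];$$ (2) there exists $\alpha_0\in(0,1)$ such that for $\alpha\in[0,\alpha_0]$ (and $\lambda\in[\lambda_1,\lambda_2]$) problem $(\ast)$ has no nontrivial solution $(x_1,x_2)\in\Theta_0$.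
   Context: $\hat E$ denotes the Banach space of functions $x\in C([0,2\pi],\mathbb{R})$ with $\int_0^{2\pi}\dot x(t)^2\,dt<\infty$, $x(0)=x(2\pi)$ and $\int_0^{2\pi}x(t)\,dt=0$, with norm $\|x\|^2=\int_0^{2\pi}(\dot x(t)^2+x(t)^2)\,dt$; such functions are identified with their $2\pi$-periodic extensions to $\mathbb{R}$. $E=\hat E\times\hat E$, and $\Theta_0=\{(x_1,x_2)\in E: x_i(t)>-b_i \text{ for } t\in[0,2\pi],\ i=1,2\}$. $|u|_\infty=\sup_{t\in[0,2\pi]}|u(t)|$. A solution of $(\ast)$ is a pair in $E$ satisfying the equations for all $t$; nontrivial means not identically zero. *)

theory Defs
  imports "HOL-Analysis.Analysis"
begin

definition mat2 :: "real \<Rightarrow> real \<Rightarrow> real \<Rightarrow> real \<Rightarrow> real^2^2" where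
  "mat2 p q r s = (\<chi> i j. if i = 1 then (if j = 1 then p else q) else (if j = 1 then r else s))"

definition real_eigenvalue :: "real^'n^'n \<Rightarrow> real \<Rightarrow> bool" where
  "real_eigenvalue M mu \<longleftrightarrow> (\<exists>v. v \<noteq> 0 \<and> M *v v = mu *s v)"

text \<open>Membership in the space hat E (identified with 2 pi-periodic extensions):
  continuous, 2 pi-periodic, mean zero, and absolutely continuous on [0, 2 pi]
  with square integrable derivative g.\<close>
definition hatE :: "(real \<Rightarrow> real) \<Rightarrow> bool" where
  "hatE x \<longleftrightarrow> continuous_on UNIV x \<and> (\<forall>t. x (t + 2*pi) = x t) \<and>
     integral {0..2*pi} x = 0 \<and>
     (\<exists>g. g integrable_on {0..2*pi} \<and> (\<lambda>t. (g t)^2) integrable_on {0..2*pi} \<and>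
          (\<forall>t\<in>{0..2*pi}. x t = x 0 + integral {0..t} g))"

definition Theta0 :: "real \<Rightarrow> real \<Rightarrow> (real \<Rightarrow> real) \<Rightarrow> (real \<Rightarrow> real) \<Rightarrow> bool" where
  "Theta0 b1 b2 x1 x2 \<longleftrightarrow> hatE x1 \<and> hatE x2 \<and> (\<forall>t\<in>{0..2*pi}. x1 t > - b1 \<and> x2 t > - b2)"

definition is_solution ::
  "real \<Rightarrow> real \<Rightarrow> real \<Rightarrow> real \<Rightarrow> real \<Rightarrow> real \<Rightarrow> real \<Rightarrow> real \<Rightarrow> real \<Rightarrow>
   (real \<Rightarrow> real) \<Rightarrow> (real \<Rightarrow> real) \<Rightarrow> bool" where
  "is_solution a11 a12 a21 a22 b1 b2 lam alpha tau x1 x2 \<longleftrightarrow>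
     hatE x1 \<and> hatE x2 \<and>
     (\<forall>t. (x1 has_real_derivative
             (- alpha * lam * (a11 * x1 (t - tau/lam) + a12 * x2 (t - tau/lam)) * (b1 + x1 t))) (at t)) \<and>
     (\<forall>t. (x2 has_real_derivative
             (- alpha * lam * (a21 * x1 (t - tau/lam) + a22 * x2 (t - tau/lam)) * (b2 + x2 t))) (at t))"

end

theory Submission
  imports Defs
begin

lemma per_nat:
  assumes "\<forall>t. x (t + 2*pi) = x t"
  shows "x (s + 2*pi*real k) = (x s :: real)"
proof (induction k arbitrary: s)
  case 0 then show ?case by simp
next
  case (Suc k)
  have "s + 2*pi*real (Suc k) = (s + 2*pi*real k) + 2*pi" by (simp add: algebra_simps)
  then have "x (s + 2*pi*real (Suc k)) = x (s + 2*pi*real k)" using assms by metis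
  then show ?case using Suc by simp
qed

lemma per_any:
  assumes "\<forall>t. x (t + 2*pi) = x t"
  shows "\<exists>t'\<in>{0..2*pi}. x t = (x t' :: real)"
proof -
  define n where "n = floor (t/(2*pi))"
  define t' where "t' = t - 2*pi*n"
  have "real_of_int n \<le> t/(2*pi)" "t/(2*pi) < real_of_int n + 1" unfolding n_def by linarith+
  then have "2*pi*n \<le> t" "t < 2*pi*n + 2*pi" using pi_gt_zero by (simp_all add: field_simps)
  then have t'in: "t' \<in> {0..2*pi}" unfolding t'_def by auto
  have "x t = x t'"
  proof (cases "n \<ge> 0")
    case True
    then have "t = t' + 2*pi*real (nat n)" unfolding t'_def by simp
    then show ?thesis using per_nat[OF assms] by metis
  next
    case False
    then have "t' = t + 2*pi*real (nat (-n))" unfolding t'_def by simp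
    then show ?thesis using per_nat[OF assms] by metis
  qed
  then show ?thesis using t'in by blast
qed

lemma sign_pts:
  assumes "hatE x"
  shows "\<exists>q\<in>{0..2*pi}. x q \<le> 0" "\<exists>p\<in>{0..2*pi}. x p \<ge> 0"
proof -
  have c: "continuous_on {0..2*pi} x" using assms unfolding hatE_def
    using continuous_on_subset by blast
  have i0: "integral {0..2*pi} x = 0" using assms unfolding hatE_def by blast
  have int: "x integrable_on {0..2*pi}" using c integrable_continuous_real by blast
  show "\<exists>q\<in>{0..2*pi}. x q \<le> 0"
  proof (rule ccontr)
    assume "\<not> ?thesis"
    then have pos: "\<forall>t\<in>{0..2*pi}. x t > 0" by force
    obtain q where q: "q \<in> {0..2*pi}" "\<forall>t\<in>{0..2*pi}. x q \<le> x t"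
      using continuous_attains_inf[OF compact_Icc _ c] pi_gt_zero by fastforce
    have "integral {0..2*pi} (\<lambda>t. x q) \<le> integral {0..2*pi} x"
      by (rule integral_le) (use int q in auto)
    moreover have "integral {0..2*pi} (\<lambda>t. x q) = 2*pi * x q" by simp
    moreover have "2*pi * x q > 0" using pos q pi_gt_zero by simp
    ultimately show False using i0 by linarith
  qed
  show "\<exists>p\<in>{0..2*pi}. x p \<ge> 0"
  proof (rule ccontr)
    assume "\<not> ?thesis"
    then have neg: "\<forall>t\<in>{0..2*pi}. x t < 0" using linorder_not_le by blast
    obtain q where q: "q \<in> {0..2*pi}" "\<forall>t\<in>{0..2*pi}. x t \<le> x q"
      using continuous_attains_sup[OF compact_Icc _ c] pi_gt_zero by fastforce
    have "integral {0..2*pi} x \<le> integral {0..2*pi} (\<lambda>t. x q)"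
      by (rule integral_le) (use int q in auto)
    moreover have "integral {0..2*pi} (\<lambda>t. x q) = 2*pi * x q" by simp
    moreover have "2*pi * x q < 0" using neg q pi_gt_zero by (simp add: mult_pos_neg)
    ultimately show False using i0 by linarith
  qed
qed

lemma log_bound:
  fixes x k :: "real \<Rightarrow> real"
  assumes hx: "hatE x" and b: "b > 0" and pos: "\<forall>t. x t > -b" and c: "c \<ge> 0"
   and d: "\<forall>t. (x has_real_derivative (-(k t) * (b + x t))) (at t)" and kc: "\<forall>t. k t \<ge> -c"
  shows "b*exp(-2*pi*c) \<le> b + x t \<and> b + x t \<le> b*exp(2*pi*c)"
proof -
  define u where "u t = ln (b + x t)" for t
  have per: "\<forall>t. x (t + 2*pi) = x t" using hx unfolding hatE_def by blast
  have du: "(u has_real_derivative -(k t)) (at t)" for t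
  proof -
    have bx: "b + x t > 0" using pos by (smt (verit))
    have "((\<lambda>t. ln (b + x t)) has_real_derivative (1/(b + x t)) * (-(k t) * (b + x t))) (at t)"
      apply (rule DERIV_chain2[where f=ln])
       apply (rule DERIV_ln_divide[OF bx])
      using DERIV_add[OF DERIV_const d[rule_format, of t]] by simp
    moreover have "(1/(b + x t)) * (-(k t) * (b + x t)) = -(k t)" using bx by (simp add: field_simps)
    ultimately show ?thesis unfolding u_def by (metis (no_types))
  qed
  have inc: "u t2 - u t1 \<le> c*(t2 - t1)" if "t1 \<le> t2" for t1 t2
  proof (cases "t1 = t2")
    case True then show ?thesis by simp
  next
    case False
    then have "t1 < t2" using that by simp
    then obtain z where "u t2 - u t1 = (t2 - t1) * (-(k z))"
      using MVT2[of t1 t2 u "\<lambda>t. -(k t)"] du by blast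
    moreover have "-(k z) \<le> c" using kc by (smt (verit))
    moreover have "(t2 - t1) * (-(k z)) \<le> (t2 - t1) * c" using that calculation(2) by (intro mult_left_mono) auto
    ultimately show ?thesis by (simp add: mult.commute)
  qed
  have cc: "c*(2*pi) = 2*pi*c" by simp
  have main: "ln b - 2*pi*c \<le> u t \<and> u t \<le> ln b + 2*pi*c" if t: "t \<in> {0..2*pi}" for t
  proof
    obtain q where q: "q \<in> {0..2*pi}" "x q \<le> 0" using sign_pts(1)[OF hx] by blast
    have uq: "u q \<le> ln b" unfolding u_def using q pos b by (smt (verit) ln_le_cancel_iff)
    have uq2: "u (q - 2*pi) = u q" unfolding u_def using per by (metis diff_add_cancel)
    show "u t \<le> ln b + 2*pi*c"
    proof (cases "q \<le> t")
      case True
      then have "u t - u q \<le> c*(t - q)" using inc by blast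
      moreover have "c*(t-q) \<le> c*(2*pi)" using c t q by (intro mult_left_mono) auto
      ultimately show ?thesis using uq cc by linarith
    next
      case False
      have "q - 2*pi \<le> t" using q t by auto
      then have "u t - u (q - 2*pi) \<le> c*(t - (q - 2*pi))" using inc by blast
      moreover have "c*(t-(q - 2*pi)) \<le> c*(2*pi)" using c t q False by (intro mult_left_mono) auto
      ultimately show ?thesis using uq uq2 cc by linarith
    qed
    obtain p where p: "p \<in> {0..2*pi}" "x p \<ge> 0" using sign_pts(2)[OF hx] by blast
    have up: "u p \<ge> ln b" unfolding u_def using p pos b by (smt (verit) ln_le_cancel_iff)
    have up2: "u (p + 2*pi) = u p" unfolding u_def using per by metis
    show "ln b - 2*pi*c \<le> u t"
    proof (cases "t \<le> p")
      case True
      then have "u p - u t \<le> c*(p - t)" using inc by blast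
      moreover have "c*(p-t) \<le> c*(2*pi)" using c t p by (intro mult_left_mono) auto
      ultimately show ?thesis using up cc by linarith
    next
      case False
      have "t \<le> p + 2*pi" using p t by auto
      then have "u (p + 2*pi) - u t \<le> c*((p + 2*pi) - t)" using inc by blast
      moreover have "c*((p + 2*pi) - t) \<le> c*(2*pi)" using c t p False by (intro mult_left_mono) auto
      ultimately show ?thesis using up up2 cc by linarith
    qed
  qed
  obtain t' where t': "t' \<in> {0..2*pi}" "x t = x t'" using per_any[OF per] by blast
  have bx: "b + x t' > 0" using pos by (smt (verit))
  have e: "exp (u t') = b + x t'" unfolding u_def using bx by simp
  from main[OF t'(1)] have "exp (ln b - 2*pi*c) \<le> exp (u t')" "exp (u t') \<le> exp (ln b + 2*pi*c)"
    by auto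
  then show ?thesis using b e t'(2) by (simp add: exp_diff exp_add mult_exp_exp exp_minus field_simps)
qed

lemma prod3:
  fixes a u v aa uu vv :: real
  assumes "0 \<le> a" "a \<le> aa" "\<bar>u\<bar> \<le> uu" "\<bar>v\<bar> \<le> vv"
  shows "\<bar>a * u * v\<bar> \<le> aa*uu * vv"
proof -
  have "\<bar>a * u * v\<bar> = a*\<bar>u\<bar>*\<bar>v\<bar>" using assms by (simp add: abs_mult)
  also have "\<dots> \<le> aa*uu * vv"
    using assms by (intro mult_mono) auto
  finally show ?thesis .
qed

lemma lip:
  fixes x f :: "real \<Rightarrow> real"
  assumes "\<forall>t. (x has_real_derivative f t) (at t)" "\<forall>t. \<bar>f t\<bar> \<le> B"
  shows "\<bar>x t2 - x t1\<bar> \<le> B * \<bar>t2 - t1\<bar>"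
proof -
  have *: "\<bar>x v - x u\<bar> \<le> B * \<bar>v - u\<bar>" if uv: "u < v" for u v
  proof -
    obtain z where "x v - x u = (v - u) * f z" using MVT2[OF uv, of x f] assms(1) by blast
    then have "\<bar>x v - x u\<bar> = \<bar>v - u\<bar> * \<bar>f z\<bar>" by (simp add: abs_mult)
    also have "\<dots> \<le> \<bar>v - u\<bar> * B" using assms(2) by (intro mult_left_mono) auto
    finally show ?thesis by (simp add: mult.commute)
  qed
  consider "t1 < t2" | "t1 = t2" | "t2 < t1" by linarith
  then show ?thesis
  proof cases
    case 1 then show ?thesis using * by blast
  next
    case 2 then show ?thesis by simp
  next
    case 3 then show ?thesis using *[OF 3] by (simp add: abs_minus_commute)
  qed
qed

lemma comp:
  fixes x y1 y2 :: "real \<Rightarrow> real"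
  assumes dx: "\<forall>t. (x has_real_derivative (-al*lm*(p*y1(t-s)+q*y2(t-s))*(b + x t))) (at t)"
    and hx: "hatE x" and b: "b > 0" and xp: "\<forall>t. x t > -b"
    and y1: "\<forall>t. y1 t > -b1" and y2: "\<forall>t. y2 t > -b2"
    and pq: "p > 0" "q > 0" and bb: "b1 > 0" "b2 > 0"
    and al: "0 \<le> al" "al \<le> 1" and lm: "0 < lm" "lm \<le> l2"
  shows "b*exp(-(2*pi*(l2*(p*b1+q*b2)))) \<le> b + x t \<and> b + x t \<le> b*exp(2*pi*(l2*(p*b1+q*b2)))"
proof -
  define c where "c = al*lm*(p*b1+q*b2)"
  have c0: "c \<ge> 0" unfolding c_def using al lm pq bb by simp
  have kc: "al*lm*(p*y1(t-s)+q*y2(t-s)) \<ge> -c" for t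
  proof -
    have "p*y1(t-s) \<ge> p*(-b1)" using y1 pq by (intro mult_left_mono) (auto simp: less_imp_le)
    moreover have "q*y2(t-s) \<ge> q*(-b2)" using y2 pq by (intro mult_left_mono) (auto simp: less_imp_le)
    ultimately have "p*y1(t-s)+q*y2(t-s) \<ge> -(p*b1+q*b2)" by simp
    then have "al*lm*(p*y1(t-s)+q*y2(t-s)) \<ge> al*lm*(-(p*b1+q*b2))"
      using al lm by (intro mult_left_mono) auto
    moreover have "al*lm*(-(p*b1+q*b2)) = -c" unfolding c_def by (simp only: mult_minus_right)
    ultimately show ?thesis by linarith
  qed
  have dx': "\<forall>t. (x has_real_derivative (-(al*lm*(p*y1(t-s)+q*y2(t-s))) * (b + x t))) (at t)"
    using dx by simp
  have lb: "b*exp(-2*pi*c) \<le> b + x t \<and> b + x t \<le> b*exp(2*pi*c)"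
    by (rule log_bound[OF hx b xp c0 dx']) (use kc in auto)
  have "c \<le> l2*(p*b1+q*b2)" unfolding c_def
  proof -
    have "al*lm \<le> 1*l2" using al lm by (intro mult_mono) auto
    then show "al*lm*(p*b1+q*b2) \<le> l2*(p*b1+q*b2)" using pq bb by (intro mult_right_mono) auto
  qed
  then have "2*pi*c \<le> 2*pi*(l2*(p*b1+q*b2))" by simp
  then have "exp(2*pi*c) \<le> exp(2*pi*(l2*(p*b1+q*b2)))" "exp(-(2*pi*(l2*(p*b1+q*b2)))) \<le> exp(-2*pi*c)"
    by auto
  then have "b*exp(2*pi*c) \<le> b*exp(2*pi*(l2*(p*b1+q*b2)))"
     "b*exp(-(2*pi*(l2*(p*b1+q*b2)))) \<le> b*exp(-2*pi*c)"
    using b by (auto intro: mult_left_mono)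
  then show ?thesis using lb by linarith
qed

lemma shiftD:
  assumes "\<forall>t. (y has_real_derivative G t) (at t)"
  shows "((\<lambda>t. y (t - s)) has_real_derivative G (t - s)) (at t)"
  using assms by (metis (no_types, lifting) ext DERIV_shift diff_conv_add_uminus)

lemma lin_bound:
  fixes y1 y2 :: real
  assumes "p \<ge> 0" "q \<ge> 0" "\<bar>y1\<bar> \<le> D" "\<bar>y2\<bar> \<le> D" "p + q \<le> S" "D \<ge> 0"
  shows "\<bar>p*y1 + q*y2\<bar> \<le> S*D"
proof -
  have "\<bar>p*y1 + q*y2\<bar> \<le> \<bar>p*y1\<bar> + \<bar>q*y2\<bar>" by (rule abs_triangle_ineq)
  also have "\<dots> = p*\<bar>y1\<bar> + q*\<bar>y2\<bar>" using assms by (simp add: abs_mult)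
  also have "\<dots> \<le> p*D + q*D" using assms by (intro add_mono mult_left_mono) auto
  also have "\<dots> = (p+q)*D" by (simp add: algebra_simps)
  also have "\<dots> \<le> S*D" using assms by (intro mult_right_mono) auto
  finally show ?thesis .
qed

lemma compd:
  fixes x y1 y2 G1 G2 F :: "real \<Rightarrow> real"
  assumes dx: "\<forall>t. (x has_real_derivative F t) (at t)"
    and Fdef: "F = (\<lambda>t. -al*lm*(p*y1(t-s)+q*y2(t-s))*(b + x t))"
    and dy1: "\<forall>t. (y1 has_real_derivative G1 t) (at t)"
    and dy2: "\<forall>t. (y2 has_real_derivative G2 t) (at t)"
    and by1: "\<forall>t. \<bar>y1 t\<bar> \<le> D" and by2: "\<forall>t. \<bar>y2 t\<bar> \<le> D" and bx: "\<forall>t. \<bar>x t\<bar> \<le> D"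
    and G: "\<forall>t. \<bar>G1 t\<bar> \<le> m" "\<forall>t. \<bar>G2 t\<bar> \<le> m" "\<forall>t. \<bar>F t\<bar> \<le> m"
    and pq: "p \<ge> 0" "q \<ge> 0" "b \<ge> 0" "p + q \<le> S" "b \<le> Bs"
    and al: "0 \<le> al" "al \<le> 1" and lm: "0 < lm" "lm \<le> l2"
  shows "\<bar>deriv x t\<bar> \<le> l2*(S*D)*(Bs+D)"
    and "\<bar>deriv (deriv x) t\<bar> \<le> l2*(S*m)*(Bs+D) + l2*(S*D)*m"
proof -
  have D0: "D \<ge> 0" using bx by (meson abs_ge_zero order_trans)
  have dxe: "deriv x = F" using dx DERIV_imp_deriv by blast
  have "al*lm \<le> 1*lm" using al lm by (intro mult_right_mono) auto
  then have all: "al*lm \<le> l2" using lm by linarith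
  have all0: "al*lm \<ge> 0" using al lm by simp
  have P: "\<bar>p*y1(u-s)+q*y2(u-s)\<bar> \<le> S*D" for u
    using lin_bound[OF pq(1,2) _ _ pq(4) D0] by1 by2 by blast
  have Q: "\<bar>b + x u\<bar> \<le> Bs + D" for u
  proof -
    have "\<bar>b + x u\<bar> \<le> \<bar>b\<bar> + \<bar>x u\<bar>" by (rule abs_triangle_ineq)
    moreover have "\<bar>x u\<bar> \<le> D" using bx by blast
    ultimately show ?thesis using pq by simp
  qed
  have Fabs: "\<bar>F u\<bar> = \<bar>(al*lm)*(p*y1(u-s)+q*y2(u-s))*(b + x u)\<bar>" for u
    unfolding Fdef by (simp add: abs_mult)
  show "\<bar>deriv x t\<bar> \<le> l2*(S*D)*(Bs+D)"
    unfolding dxe Fabs by (rule prod3[OF all0 all P Q])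
  have h1: "((\<lambda>t. y1 (t - s)) has_real_derivative G1 (t - s)) (at t)" by (rule shiftD[OF dy1])
  have h2: "((\<lambda>t. y2 (t - s)) has_real_derivative G2 (t - s)) (at t)" by (rule shiftD[OF dy2])
  have e1: "((\<lambda>t. p*y1(t-s)+q*y2(t-s)) has_real_derivative p*G1(t-s)+q*G2(t-s)) (at t)"
    using DERIV_add[OF DERIV_cmult[OF h1] DERIV_cmult[OF h2]] by simp
  have e2: "((\<lambda>t. b + x t) has_real_derivative F t) (at t)"
    using DERIV_add[OF DERIV_const dx[rule_format, of t]] by simp
  have e3: "((\<lambda>t. (-al*lm) * ((p*y1(t-s)+q*y2(t-s)) * (b + x t))) has_real_derivative
     (-al*lm) * ((p*G1(t-s)+q*G2(t-s)) * (b + x t) + F t * (p*y1(t-s)+q*y2(t-s)))) (at t)"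
    by (rule DERIV_cmult[OF DERIV_mult[OF e1 e2]])
  have Fe: "F = (\<lambda>t. (-al*lm) * ((p*y1(t-s)+q*y2(t-s)) * (b + x t)))"
    unfolding Fdef by (simp add: mult.assoc)
  have dd: "deriv (deriv x) t = (-al*lm) * ((p*G1(t-s)+q*G2(t-s)) * (b + x t) + F t * (p*y1(t-s)+q*y2(t-s)))"
    unfolding dxe using DERIV_imp_deriv[OF e3] Fe by simp
  have P': "\<bar>p*G1(t-s)+q*G2(t-s)\<bar> \<le> S*m"
    using lin_bound[OF pq(1,2) _ _ pq(4)] G by (meson abs_ge_zero order_trans)
  have t1: "\<bar>(al*lm)*(p*G1(t-s)+q*G2(t-s))*(b + x t)\<bar> \<le> l2*(S*m)*(Bs+D)"
    by (rule prod3[OF all0 all P' Q])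
  have t2: "\<bar>(al*lm)*(p*y1(t-s)+q*y2(t-s))*F t\<bar> \<le> l2*(S*D)*m"
    by (rule prod3[OF all0 all P]) (use G in blast)
  have "\<bar>deriv (deriv x) t\<bar> = \<bar>(al*lm)*(p*G1(t-s)+q*G2(t-s))*(b + x t) + (al*lm)*(p*y1(t-s)+q*y2(t-s))*F t\<bar>"
    unfolding dd by (simp add: algebra_simps abs_minus_commute)
  also have "\<dots> \<le> l2*(S*m)*(Bs+D) + l2*(S*D)*m"
    using t1 t2 abs_triangle_ineq[of "(al*lm)*(p*G1(t-s)+q*G2(t-s))*(b + x t)" "(al*lm)*(p*y1(t-s)+q*y2(t-s))*F t"]
    by linarith
  finally show "\<bar>deriv (deriv x) t\<bar> \<le> l2*(S*m)*(Bs+D) + l2*(S*D)*m" .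
qed

lemma comp2:
  fixes x y1 y2 F :: "real \<Rightarrow> real"
  assumes dx: "\<forall>t. (x has_real_derivative F t) (at t)"
    and Fdef: "F = (\<lambda>t. -al*lm*(p*y1(t-s)+q*y2(t-s))*(b + x t))"
    and hx: "hatE x"
    and by1: "\<forall>t. \<bar>y1 t\<bar> \<le> N" and by2: "\<forall>t. \<bar>y2 t\<bar> \<le> N" and bx: "\<forall>t. \<bar>x t\<bar> \<le> D"
    and pq: "p \<ge> 0" "q \<ge> 0" "b \<ge> 0" "p + q \<le> S" "b \<le> Bs"
    and al: "0 \<le> al" and lm: "0 < lm" "lm \<le> l2"
    and t: "t \<in> {0..2*pi}"
  shows "\<bar>x t\<bar> \<le> 2*pi*((al*l2)*(S*N)*(Bs+D))"
proof -
  define B where "B = (al*l2)*(S*N)*(Bs+D)"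
  have N0: "N \<ge> 0" using by1 by (meson abs_ge_zero order_trans)
  have all: "al*lm \<le> al*l2" using al lm by (intro mult_left_mono) auto
  have all0: "al*lm \<ge> 0" using al lm by simp
  have P: "\<bar>p*y1(u-s)+q*y2(u-s)\<bar> \<le> S*N" for u
    using lin_bound[OF pq(1,2) _ _ pq(4) N0] by1 by2 by blast
  have Q: "\<bar>b + x u\<bar> \<le> Bs + D" for u
  proof -
    have "\<bar>b + x u\<bar> \<le> \<bar>b\<bar> + \<bar>x u\<bar>" by (rule abs_triangle_ineq)
    moreover have "\<bar>x u\<bar> \<le> D" using bx by blast
    ultimately show ?thesis using pq by simp
  qed
  have Fabs: "\<bar>F u\<bar> = \<bar>(al*lm)*(p*y1(u-s)+q*y2(u-s))*(b + x u)\<bar>" for u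
    unfolding Fdef by (simp add: abs_mult)
  have FB: "\<forall>u. \<bar>F u\<bar> \<le> B" unfolding B_def Fabs using prod3[OF all0 all P Q] by blast
  have B0: "B \<ge> 0" using FB by (meson abs_ge_zero order_trans)
  have L: "\<bar>x t - x u\<bar> \<le> B * \<bar>t - u\<bar>" for u using lip[OF dx FB] by blast
  have L2: "\<bar>x t - x u\<bar> \<le> B * (2*pi)" if "u \<in> {0..2*pi}" for u
  proof -
    have "\<bar>t - u\<bar> \<le> 2*pi" using that t by auto
    then have "B * \<bar>t - u\<bar> \<le> B * (2*pi)" using B0 by (intro mult_left_mono) auto
    then show ?thesis using L[of u] by linarith
  qed
  obtain q where q: "q \<in> {0..2*pi}" "x q \<le> 0" using sign_pts(1)[OF hx] by blast
  obtain p where p: "p \<in> {0..2*pi}" "x p \<ge> 0" using sign_pts(2)[OF hx] by blast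
  have "x t \<le> B*(2*pi)" using L2[OF q(1)] q(2) by linarith
  moreover have "x t \<ge> -(B*(2*pi))" using L2[OF p(1)] p(2) by linarith
  ultimately show ?thesis unfolding B_def by (simp add: mult.commute abs_le_iff)
qed

lemma compd1:
  fixes x y1 y2 :: "real \<Rightarrow> real"
  assumes bx: "\<forall>t. \<bar>x t\<bar> \<le> D" and by1: "\<forall>t. \<bar>y1 t\<bar> \<le> D" and by2: "\<forall>t. \<bar>y2 t\<bar> \<le> D"
    and pq: "p \<ge> 0" "q \<ge> 0" "b \<ge> 0" "p + q \<le> S" "b \<le> Bs"
    and al: "0 \<le> al" "al \<le> 1" and lm: "0 < lm" "lm \<le> l2"
  shows "\<bar>-al*lm*(p*y1(t-s)+q*y2(t-s))*(b + x t)\<bar> \<le> l2*(S*D)*(Bs+D)"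
proof -
  have D0: "D \<ge> 0" using bx by (meson abs_ge_zero order_trans)
  have "al*lm \<le> 1*lm" using al lm by (intro mult_right_mono) auto
  then have all: "al*lm \<le> l2" using lm by linarith
  have all0: "al*lm \<ge> 0" using al lm by simp
  have P: "\<bar>p*y1(u-s)+q*y2(u-s)\<bar> \<le> S*D" for u
    using lin_bound[OF pq(1,2) _ _ pq(4) D0] by1 by2 by blast
  have Q: "\<bar>b + x u\<bar> \<le> Bs + D" for u
  proof -
    have "\<bar>b + x u\<bar> \<le> \<bar>b\<bar> + \<bar>x u\<bar>" by (rule abs_triangle_ineq)
    moreover have "\<bar>x u\<bar> \<le> D" using bx by blast
    ultimately show ?thesis using pq by simp
  qed
  have "\<bar>-al*lm*(p*y1(t-s)+q*y2(t-s))*(b + x t)\<bar> = \<bar>(al*lm)*(p*y1(t-s)+q*y2(t-s))*(b + x t)\<bar>"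
    by (simp add: abs_mult)
  then show ?thesis using prod3[OF all0 all P Q] by simp
qed

lemma sol_bounds:
  fixes x1 x2 :: "real \<Rightarrow> real"
  assumes pos_a: "a11 > 0" "a12 > 0" "a21 > 0" "a22 > 0"
    and pos_b: "b1 > 0" "b2 > 0"
    and al: "0 \<le> alpha" "alpha \<le> 1" and lm: "0 < lam" "lam \<le> lam2"
    and sol: "is_solution a11 a12 a21 a22 b1 b2 lam alpha tau x1 x2" and th: "Theta0 b1 b2 x1 x2"
    and K: "K = 2*pi*(lam2*(a11*b1+a12*b2)) + 2*pi*(lam2*(a21*b1+a22*b2))"
  shows "b1*exp(-K) \<le> b1 + x1 t \<and> b1 + x1 t \<le> b1*exp K"
    and "b2*exp(-K) \<le> b2 + x2 t \<and> b2 + x2 t \<le> b2*exp K"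
proof -
  have h1: "hatE x1" and h2: "hatE x2" using sol unfolding is_solution_def by auto
  have d1: "\<forall>t. (x1 has_real_derivative
             (- alpha * lam * (a11 * x1 (t - tau/lam) + a12 * x2 (t - tau/lam)) * (b1 + x1 t))) (at t)"
   and d2: "\<forall>t. (x2 has_real_derivative
             (- alpha * lam * (a21 * x1 (t - tau/lam) + a22 * x2 (t - tau/lam)) * (b2 + x2 t))) (at t)"
    using sol unfolding is_solution_def by auto
  have per1: "\<forall>t. x1 (t + 2*pi) = x1 t" using h1 unfolding hatE_def by blast
  have per2: "\<forall>t. x2 (t + 2*pi) = x2 t" using h2 unfolding hatE_def by blast
  have p1: "\<forall>t. x1 t > -b1"
  proof
    fix t obtain t' where "t' \<in> {0..2*pi}" "x1 t = x1 t'" using per_any[OF per1] by blast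
    then show "x1 t > -b1" using th unfolding Theta0_def by auto
  qed
  have p2: "\<forall>t. x2 t > -b2"
  proof
    fix t obtain t' where "t' \<in> {0..2*pi}" "x2 t = x2 t'" using per_any[OF per2] by blast
    then show "x2 t > -b2" using th unfolding Theta0_def by auto
  qed
  have c1: "b1*exp(-(2*pi*(lam2*(a11*b1+a12*b2)))) \<le> b1 + x1 t \<and> b1 + x1 t \<le> b1*exp(2*pi*(lam2*(a11*b1+a12*b2)))"
    by (rule comp[OF d1 h1 pos_b(1) p1 p1 p2 pos_a(1,2) pos_b al lm])
  have c2: "b2*exp(-(2*pi*(lam2*(a21*b1+a22*b2)))) \<le> b2 + x2 t \<and> b2 + x2 t \<le> b2*exp(2*pi*(lam2*(a21*b1+a22*b2)))"
    by (rule comp[OF d2 h2 pos_b(2) p2 p1 p2 pos_a(3,4) pos_b al lm])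
  have l2: "lam2 > 0" using lm by simp
  have k1: "2*pi*(lam2*(a11*b1+a12*b2)) \<ge> 0" "2*pi*(lam2*(a21*b1+a22*b2)) \<ge> 0"
    using pos_a pos_b l2 by simp_all
  have "exp(2*pi*(lam2*(a11*b1+a12*b2))) \<le> exp K" "exp(-K) \<le> exp(-(2*pi*(lam2*(a11*b1+a12*b2))))"
    "exp(2*pi*(lam2*(a21*b1+a22*b2))) \<le> exp K" "exp(-K) \<le> exp(-(2*pi*(lam2*(a21*b1+a22*b2))))"
    unfolding K using k1 by auto
  then have "b1*exp(2*pi*(lam2*(a11*b1+a12*b2))) \<le> b1*exp K" "b1*exp(-K) \<le> b1*exp(-(2*pi*(lam2*(a11*b1+a12*b2))))"
    "b2*exp(2*pi*(lam2*(a21*b1+a22*b2))) \<le> b2*exp K" "b2*exp(-K) \<le> b2*exp(-(2*pi*(lam2*(a21*b1+a22*b2))))"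
    using pos_b by (auto intro: mult_left_mono)
  then show "b1*exp(-K) \<le> b1 + x1 t \<and> b1 + x1 t \<le> b1*exp K"
    and "b2*exp(-K) \<le> b2 + x2 t \<and> b2 + x2 t \<le> b2*exp K" using c1 c2 by linarith+
qed

theorem lemma3p1:
  fixes a11 a12 a21 a22 b1 b2 lam1 lam2 :: real
  assumes pos_a: "a11 > 0" "a12 > 0" "a21 > 0" "a22 > 0"
    and pos_b: "b1 > 0" "b2 > 0"
    and A1: "\<forall>y::real^2. y \<noteq> 0 \<longrightarrow> (mat2 a11 a12 a21 a22 *v y) \<bullet> y > 0"
    and A2: "\<exists>mu1 mu2. mu1 > 0 \<and> mu2 > 0 \<and> mu1 \<noteq> mu2 \<and>
               real_eigenvalue (mat2 (b1*a11) (b1*a12) (b2*a21) (b2*a22)) mu1 \<and>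
               real_eigenvalue (mat2 (b1*a11) (b1*a12) (b2*a21) (b2*a22)) mu2"
    and lam: "0 < lam1" "lam1 < lam2"
  shows "(\<exists>m0 d1 d2 d3 d4. m0 > 0 \<and> d1 > 0 \<and> d2 > 0 \<and> d3 > 0 \<and> d4 > 0 \<and>
            -b1 < -d1 \<and> -b2 < -d2 \<and>
            (\<forall>lam\<in>{lam1..lam2}. \<forall>alpha\<in>{0..1}. \<forall>tau\<ge>1. \<forall>x1 x2.
               is_solution a11 a12 a21 a22 b1 b2 lam alpha tau x1 x2 \<and> Theta0 b1 b2 x1 x2 \<longrightarrow>
               (\<forall>t\<in>{0..2*pi}.
                  \<bar>deriv x1 t\<bar> < m0 \<and> \<bar>deriv x2 t\<bar> < m0 \<and>
                  \<bar>deriv (deriv x1) t\<bar> < m0 \<and> \<bar>deriv (deriv x2) t\<bar> < m0 \<and>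
                  -d1 < x1 t \<and> x1 t < d3 \<and> -d2 < x2 t \<and> x2 t < d4)))
       \<and> (\<exists>alpha0. 0 < alpha0 \<and> alpha0 < 1 \<and>
            (\<forall>alpha\<in>{0..alpha0}. \<forall>lam\<in>{lam1..lam2}. \<forall>tau\<ge>1. \<forall>x1 x2.
               is_solution a11 a12 a21 a22 b1 b2 lam alpha tau x1 x2 \<and> Theta0 b1 b2 x1 x2 \<longrightarrow>
               x1 = (\<lambda>_. 0) \<and> x2 = (\<lambda>_. 0)))"
proof -
  define S where "S = a11+a12+a21+a22"
  define Bs where "Bs = b1+b2"
  define K where "K = 2*pi*(lam2*(a11*b1+a12*b2)) + 2*pi*(lam2*(a21*b1+a22*b2))"
  define D where "D = Bs * exp K"
  define m1 where "m1 = lam2*(S*D)*(Bs+D)"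
  define m0 where "m0 = m1 + (lam2*(S*m1)*(Bs+D) + lam2*(S*D)*m1) + 1"
  define L where "L = lam2*(S*(Bs+D))"
  define alpha0 where "alpha0 = 1/(2*pi*L + 2)"
  have l2: "lam2 > 0" using lam by simp
  have K0: "K \<ge> 0" unfolding K_def using pos_a pos_b l2 by simp
  have eK: "exp K \<ge> 1" "exp (-K) \<le> 1" "exp (-K) > 0" using K0 by auto
  have S0: "S > 0" unfolding S_def using pos_a by simp
  have Bs0: "Bs > 0" unfolding Bs_def using pos_b by simp
  have DBs: "D \<ge> Bs" unfolding D_def using Bs0 eK by simp
  have D0: "D > 0" using DBs Bs0 by simp
  have m10: "m1 \<ge> 0" unfolding m1_def using l2 S0 D0 Bs0 by simp
  have m20: "lam2*(S*m1)*(Bs+D) + lam2*(S*D)*m1 \<ge> 0" using l2 S0 D0 Bs0 m10 by simp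
  have L0: "L \<ge> 0" unfolding L_def using l2 S0 D0 Bs0 by simp
  have b1K: "b1 * exp K \<le> D" unfolding D_def Bs_def using pos_b eK by (simp add: distrib_right)
  have b2K: "b2 * exp K \<le> D" unfolding D_def Bs_def using pos_b eK by (simp add: distrib_right)
  have b1Kp: "b1 * exp (-K) > 0" "b2 * exp (-K) > 0" using pos_b eK by simp_all
  have b1Kl: "b1 * exp (-K) \<le> b1" "b2 * exp (-K) \<le> b2" using pos_b eK by simp_all
  have pL: "2*pi*L \<ge> 0" using L0 by simp
  have a0: "0 < alpha0" "alpha0 < 1" unfolding alpha0_def using pL by (auto simp: field_simps)
  have abound: "\<bar>x1 t\<bar> \<le> D \<and> \<bar>x2 t\<bar> \<le> D"
    if sol: "is_solution a11 a12 a21 a22 b1 b2 lam alpha tau x1 x2" and th: "Theta0 b1 b2 x1 x2"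
      and al: "0 \<le> alpha" "alpha \<le> 1" and lm: "0 < lam" "lam \<le> lam2" for lam alpha tau x1 x2 t
  proof -
    note sb = sol_bounds[OF pos_a pos_b al lm sol th K_def, of t]
    have "b1 \<le> D" "b2 \<le> D" using DBs pos_b unfolding Bs_def by auto
    moreover have "x1 t \<ge> -b1" using conjunct1[OF sb(1)] b1Kp(1) by linarith
    moreover have "x2 t \<ge> -b2" using conjunct1[OF sb(2)] b1Kp(2) by linarith
    ultimately show ?thesis using sb b1K b2K pos_b by (auto simp: abs_le_iff)
  qed
  have part1: "\<forall>lam\<in>{lam1..lam2}. \<forall>alpha\<in>{0..1}. \<forall>tau\<ge>1. \<forall>x1 x2.
               is_solution a11 a12 a21 a22 b1 b2 lam alpha tau x1 x2 \<and> Theta0 b1 b2 x1 x2 \<longrightarrow>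
               (\<forall>t\<in>{0..2*pi}.
                  \<bar>deriv x1 t\<bar> < m0 \<and> \<bar>deriv x2 t\<bar> < m0 \<and>
                  \<bar>deriv (deriv x1) t\<bar> < m0 \<and> \<bar>deriv (deriv x2) t\<bar> < m0 \<and>
                  -(b1 - b1*exp(-K)/2) < x1 t \<and> x1 t < b1*exp K \<and> -(b2 - b2*exp(-K)/2) < x2 t \<and> x2 t < b2*exp K)"
  proof (intro ballI allI impI)
    fix lam alpha tau x1 x2 t
    assume lamI: "lam \<in> {lam1..lam2}" and alI: "alpha \<in> {0..1}" and "tau \<ge> 1"
      and st: "is_solution a11 a12 a21 a22 b1 b2 lam alpha tau x1 x2 \<and> Theta0 b1 b2 x1 x2"
      and t: "t \<in> {0..2*pi}"
    have sol: "is_solution a11 a12 a21 a22 b1 b2 lam alpha tau x1 x2" and th: "Theta0 b1 b2 x1 x2"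
      using st by auto
    have al: "0 \<le> alpha" "alpha \<le> 1" using alI by auto
    have lm: "0 < lam" "lam \<le> lam2" using lamI lam by auto
    have ab: "\<forall>t. \<bar>x1 t\<bar> \<le> D" "\<forall>t. \<bar>x2 t\<bar> \<le> D" using abound[OF sol th al lm] by auto
    define F1 where "F1 = (\<lambda>t. - alpha * lam * (a11 * x1 (t - tau/lam) + a12 * x2 (t - tau/lam)) * (b1 + x1 t))"
    define F2 where "F2 = (\<lambda>t. - alpha * lam * (a21 * x1 (t - tau/lam) + a22 * x2 (t - tau/lam)) * (b2 + x2 t))"
    have d1: "\<forall>t. (x1 has_real_derivative F1 t) (at t)"
     and d2: "\<forall>t. (x2 has_real_derivative F2 t) (at t)"
      using sol unfolding is_solution_def F1_def F2_def by auto
    have pq1: "a11 \<ge> 0" "a12 \<ge> 0" "b1 \<ge> 0" "a11 + a12 \<le> S" "b1 \<le> Bs"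
      using pos_a pos_b unfolding S_def Bs_def by auto
    have pq2: "a21 \<ge> 0" "a22 \<ge> 0" "b2 \<ge> 0" "a21 + a22 \<le> S" "b2 \<le> Bs"
      using pos_a pos_b unfolding S_def Bs_def by auto
    have F1b: "\<forall>t. \<bar>F1 t\<bar> \<le> m1" unfolding F1_def m1_def
      using compd1[OF ab(1) ab(1) ab(2) pq1 al lm] by blast
    have F2b: "\<forall>t. \<bar>F2 t\<bar> \<le> m1" unfolding F2_def m1_def
      using compd1[OF ab(2) ab(1) ab(2) pq2 al lm] by blast
    have c1: "\<bar>deriv x1 t\<bar> \<le> lam2*(S*D)*(Bs+D)"
      "\<bar>deriv (deriv x1) t\<bar> \<le> lam2*(S*m1)*(Bs+D) + lam2*(S*D)*m1"
      by (rule compd[OF d1 F1_def d1 d2 ab(1) ab(2) ab(1) F1b F2b F1b pq1 al lm])+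
    have c2: "\<bar>deriv x2 t\<bar> \<le> lam2*(S*D)*(Bs+D)"
      "\<bar>deriv (deriv x2) t\<bar> \<le> lam2*(S*m1)*(Bs+D) + lam2*(S*D)*m1"
      by (rule compd[OF d2 F2_def d1 d2 ab(1) ab(2) ab(2) F1b F2b F2b pq2 al lm])+
    note sb = sol_bounds[OF pos_a pos_b al lm sol th K_def, of t]
    have lo1: "-(b1 - b1*exp(-K)/2) < x1 t" using conjunct1[OF sb(1)] b1Kp(1) by linarith
    have lo2: "-(b2 - b2*exp(-K)/2) < x2 t" using conjunct1[OF sb(2)] b1Kp(2) by linarith
    show "\<bar>deriv x1 t\<bar> < m0 \<and> \<bar>deriv x2 t\<bar> < m0 \<and>
                  \<bar>deriv (deriv x1) t\<bar> < m0 \<and> \<bar>deriv (deriv x2) t\<bar> < m0 \<and>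
                  -(b1 - b1*exp(-K)/2) < x1 t \<and> x1 t < b1*exp K \<and> -(b2 - b2*exp(-K)/2) < x2 t \<and> x2 t < b2*exp K"
      using c1 c2 sb m10 m20 lo1 lo2 pos_b unfolding m0_def m1_def[symmetric] by auto
  qed
  have part2: "\<forall>alpha\<in>{0..alpha0}. \<forall>lam\<in>{lam1..lam2}. \<forall>tau\<ge>1. \<forall>x1 x2.
               is_solution a11 a12 a21 a22 b1 b2 lam alpha tau x1 x2 \<and> Theta0 b1 b2 x1 x2 \<longrightarrow>
               x1 = (\<lambda>_. 0) \<and> x2 = (\<lambda>_. 0)"
  proof (intro ballI allI impI)
    fix alpha lam tau x1 x2
    assume alI: "alpha \<in> {0..alpha0}" and lamI: "lam \<in> {lam1..lam2}" and "tau \<ge> 1"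
      and st: "is_solution a11 a12 a21 a22 b1 b2 lam alpha tau x1 x2 \<and> Theta0 b1 b2 x1 x2"
    have sol: "is_solution a11 a12 a21 a22 b1 b2 lam alpha tau x1 x2" and th: "Theta0 b1 b2 x1 x2"
      using st by auto
    note a01 = a0(2)
    have al: "0 \<le> alpha" "alpha \<le> 1" using alI a01 by auto
    have lm: "0 < lam" "lam \<le> lam2" using lamI lam by auto
    have ab: "\<forall>t. \<bar>x1 t\<bar> \<le> D" "\<forall>t. \<bar>x2 t\<bar> \<le> D" using abound[OF sol th al lm] by auto
    define F1 where "F1 = (\<lambda>t. - alpha * lam * (a11 * x1 (t - tau/lam) + a12 * x2 (t - tau/lam)) * (b1 + x1 t))"
    define F2 where "F2 = (\<lambda>t. - alpha * lam * (a21 * x1 (t - tau/lam) + a22 * x2 (t - tau/lam)) * (b2 + x2 t))"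
    have d1: "\<forall>t. (x1 has_real_derivative F1 t) (at t)"
     and d2: "\<forall>t. (x2 has_real_derivative F2 t) (at t)"
      using sol unfolding is_solution_def F1_def F2_def by auto
    have h1: "hatE x1" and h2: "hatE x2" using sol unfolding is_solution_def by auto
    have pq1: "a11 \<ge> 0" "a12 \<ge> 0" "b1 \<ge> 0" "a11 + a12 \<le> S" "b1 \<le> Bs"
      using pos_a pos_b unfolding S_def Bs_def by auto
    have pq2: "a21 \<ge> 0" "a22 \<ge> 0" "b2 \<ge> 0" "a21 + a22 \<le> S" "b2 \<le> Bs"
      using pos_a pos_b unfolding S_def Bs_def by auto
    have maxpt: "\<exists>t0\<in>{0..2*pi}. \<forall>t. \<bar>x t\<bar> \<le> \<bar>x t0\<bar>" if hx: "hatE x" for x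
    proof -
      have "continuous_on UNIV x" using hx unfolding hatE_def by blast
      then have "continuous_on {0..2*pi} x" using continuous_on_subset by blast
      then have cc: "continuous_on {0..2*pi} (\<lambda>t. \<bar>x t\<bar>)"
        by (rule continuous_on_rabs)
      have ne: "{0..2*pi} \<noteq> {}" using pi_gt_zero by simp
      obtain t0 where t0: "t0 \<in> {0..2*pi}" "\<forall>t\<in>{0..2*pi}. \<bar>x t\<bar> \<le> \<bar>x t0\<bar>"
        using continuous_attains_sup[OF compact_Icc ne cc] by blast
      have per: "\<forall>t. x (t + 2*pi) = x t" using hx unfolding hatE_def by blast
      have "\<bar>x t\<bar> \<le> \<bar>x t0\<bar>" for t
      proof -
        obtain t' where "t' \<in> {0..2*pi}" "x t = x t'" using per_any[OF per] by blast
        then show ?thesis using t0 by auto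
      qed
      then show ?thesis using t0 by blast
    qed
    obtain t1 where t1: "t1 \<in> {0..2*pi}" "\<forall>t. \<bar>x1 t\<bar> \<le> \<bar>x1 t1\<bar>" using maxpt[OF h1] by blast
    obtain t2 where t2: "t2 \<in> {0..2*pi}" "\<forall>t. \<bar>x2 t\<bar> \<le> \<bar>x2 t2\<bar>" using maxpt[OF h2] by blast
    define N where "N = max \<bar>x1 t1\<bar> \<bar>x2 t2\<bar>"
    have gN1: "\<forall>t. \<bar>x1 t\<bar> \<le> N"
      using t1(2) unfolding N_def by (meson max.cobounded1 order_trans)
    have gN2: "\<forall>t. \<bar>x2 t\<bar> \<le> N"
      using t2(2) unfolding N_def by (meson max.cobounded2 order_trans)
    define c where "c = 2*pi*alpha*L"
    have ceq: "2*pi*((alpha*lam2)*(S*N)*(Bs+D)) = c*N" unfolding c_def L_def by (simp add: algebra_simps)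
    have e1: "\<bar>x1 t1\<bar> \<le> c*N"
      using comp2[OF d1 F1_def h1 gN1 gN2 ab(1) pq1 al(1) lm t1(1)] ceq by simp
    have e2: "\<bar>x2 t2\<bar> \<le> c*N"
      using comp2[OF d2 F2_def h2 gN1 gN2 ab(2) pq2 al(1) lm t2(1)] ceq by simp
    have NcN: "N \<le> c*N" using e1 e2 unfolding N_def by simp
    have "2*pi*L \<ge> 0" using L0 by simp
    have "c \<le> 2*pi*alpha0*L" unfolding c_def using alI L0 pi_gt_zero
      by (intro mult_right_mono mult_left_mono) auto
    also have "2*pi*alpha0*L = (2*pi*L)/(2*pi*L+2)" unfolding alpha0_def by simp
    also have "\<dots> < 1"
    proof -
      have pos: "2*pi*L + 2 > 0" using \<open>2*pi*L \<ge> 0\<close> by linarith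
      then show ?thesis by (simp add: divide_less_eq)
    qed
    finally have c1: "c < 1" .
    have N0: "N \<ge> 0" unfolding N_def by simp
    have "N = 0"
    proof (rule ccontr)
      assume "N \<noteq> 0"
      then have "N > 0" using N0 by simp
      then have "c*N < 1*N" using c1 by (intro mult_strict_right_mono) auto
      then show False using NcN by simp
    qed
    then have z1: "\<forall>t. x1 t = 0" and z2: "\<forall>t. x2 t = 0" using gN1 gN2 by auto
    show "x1 = (\<lambda>_. 0) \<and> x2 = (\<lambda>_. 0)" using z1 z2 by auto
  qed
  have e2: "exp (-K) < 2" using eK(2) by linarith
  have dpos: "b1 - b1*exp(-K)/2 > 0" "b2 - b2*exp(-K)/2 > 0" using pos_b e2 b1Kl by linarith+
  have dlt: "-b1 < -(b1 - b1*exp(-K)/2)" "-b2 < -(b2 - b2*exp(-K)/2)" using b1Kp by linarith+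
  have d34: "b1*exp K > 0" "b2*exp K > 0" using pos_b by simp_all
  have m0p: "m0 > 0" unfolding m0_def using m10 m20 by linarith
  have P1: "\<exists>m0 d1 d2 d3 d4. m0 > 0 \<and> d1 > 0 \<and> d2 > 0 \<and> d3 > 0 \<and> d4 > 0 \<and>
            -b1 < -d1 \<and> -b2 < -d2 \<and>
            (\<forall>lam\<in>{lam1..lam2}. \<forall>alpha\<in>{0..1}. \<forall>tau\<ge>1. \<forall>x1 x2.
               is_solution a11 a12 a21 a22 b1 b2 lam alpha tau x1 x2 \<and> Theta0 b1 b2 x1 x2 \<longrightarrow>
               (\<forall>t\<in>{0..2*pi}.
                  \<bar>deriv x1 t\<bar> < m0 \<and> \<bar>deriv x2 t\<bar> < m0 \<and>
                  \<bar>deriv (deriv x1) t\<bar> < m0 \<and> \<bar>deriv (deriv x2) t\<bar> < m0 \<and>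
                  -d1 < x1 t \<and> x1 t < d3 \<and> -d2 < x2 t \<and> x2 t < d4))"
    by (rule exI[of _ m0], rule exI[of _ "b1 - b1*exp(-K)/2"], rule exI[of _ "b2 - b2*exp(-K)/2"],
        rule exI[of _ "b1*exp K"], rule exI[of _ "b2*exp K"])
      (use part1 m0p dpos dlt d34 in blast)
  show ?thesis using P1 part2 a0 by blast
qed

end
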